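(* Let $p_j>0$, $q_{j+1}>0$, $r_j\ge 0$ ($j\ge 0$) be the one-step transition probabilities of a random walk on $\mathcal{N}=\{0,1,2,\dots\}$ (up-step $p_j$, holding $r_j$, down-step $q_j$ from state $j$), with $q_0:=0$ and $p_j+q_j+r_j=1$ for all $j\ge0$. Define polynomials $Q_n$ by $Q_0(x)=1$, $p_0Q_1(x)=x-r_0$, and $xQ_n(x)=q_nQ_{n-1}(x)+r_nQ_n(x)+p_nQ_{n+1}(x)$ for $n\ge 1$. Let $\psi$ be the unique Borel probability measure on $[-1,1]$ with infinite support with respect to which the $Q_n$ are orthogonal, let $\eta:=\sup\operatorname{supp}(\psi)$, and let $\theta\ge\eta$. If the random walk is periodic (i.e. $r_j=0$ for all $j$), then $|Q_n(\theta)/Q_n(-\theta)|=1$ for all $n$. If the random walk is aperiodic (i.e. $r_j>0$ for some $j$), then $|Q_n(\theta)/Q_n(-\theta)|$ is decreasing in $n$ and tends to a limit satisfying \[0\le\lim_{n\to\infty}|Q_n(\theta)/Q_n(-\theta)|<1.\]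
   Context: It is known that $\eta>0$ and that $Q_n(x)>0$ for all $n\ge0$ whenever $x\ge\eta$. *)

theory Defs
  imports "HOL-Probability.Probability"
begin

fun Qpoly :: "(nat \<Rightarrow> real) \<Rightarrow> (nat \<Rightarrow> real) \<Rightarrow> (nat \<Rightarrow> real) \<Rightarrow> nat \<Rightarrow> real \<Rightarrow> real" where
  "Qpoly p q r 0 x = 1"
| "Qpoly p q r (Suc 0) x = (x - r 0) / p 0"
| "Qpoly p q r (Suc (Suc n)) x =
     ((x - r (Suc n)) * Qpoly p q r (Suc n) x - q (Suc n) * Qpoly p q r n x) / p (Suc n)"

definition msupp :: "real measure \<Rightarrow> real set" where
  "msupp M = {x. \<forall>e>0. emeasure M (ball x e) > 0}"

end

theory Submission
  imports Defs
begin

lemma Qrec: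
  assumes "\<And>j. p j > 0" "q 0 = 0"
  shows "p n * Qpoly p q r (Suc n) x = (x - r n) * Qpoly p q r n x - q n * Qpoly p q r (n - 1) x"
  using assms(1)[of n] assms(2) by (cases n) auto

lemma main_ind:
  fixes a b D :: "nat \<Rightarrow> real"
  assumes pp: "\<And>j. p j > 0" and qq: "\<And>j. q j \<ge> 0" and rr: "\<And>j. r j \<ge> 0"
    and a: "\<And>n. a n > 0" and b0: "b 0 = 1" and a0: "a 0 = 1"
    and D: "\<And>n. D n = a n * b (Suc n) - a (Suc n) * b n"
    and DR: "\<And>n. p n * D n = 2 * r n * a n * b n + q n * D (n - 1)"
    and q0: "q 0 = 0"
  shows "b n > 0 \<and> D n \<ge> 0"
proof (induction n)
  case 0
  have "p 0 * D 0 \<ge> 0" using DR[of 0] q0 rr[of 0] a[of 0] b0 by simp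
  hence d: "D 0 \<ge> 0" using pp[of 0] by (simp add: zero_le_mult_iff)
  show ?case using d b0 by simp
next
  case (Suc n)
  hence bn: "b n > 0" and dn: "D n \<ge> 0" by auto
  have "a n * b (Suc n) \<ge> a (Suc n) * b n" using D[of n] dn by simp
  moreover have "a (Suc n) * b n > 0" using a bn by simp
  ultimately have "a n * b (Suc n) > 0" by linarith
  hence bs: "b (Suc n) > 0" using a[of n] by (simp add: zero_less_mult_iff)
  have "2 * r (Suc n) * a (Suc n) * b (Suc n) \<ge> 0" using rr[of "Suc n"] a[of "Suc n"] bs by simp
  moreover have "q (Suc n) * D n \<ge> 0" using qq dn by simp
  ultimately have "p (Suc n) * D (Suc n) \<ge> 0" using DR[of "Suc n"] by simp
  hence "D (Suc n) \<ge> 0" using pp[of "Suc n"] by (simp add: zero_le_mult_iff)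
  with bs show ?case by simp
qed

theorem lemma2:
  fixes p q r :: "nat \<Rightarrow> real" and \<psi> :: "real measure" and \<theta> :: real
  assumes p_pos: "\<And>j. p j > 0"
    and q_pos: "\<And>j. q (Suc j) > 0"
    and r_nonneg: "\<And>j. r j \<ge> 0"
    and q0: "q 0 = 0"
    and stoch: "\<And>j. p j + q j + r j = 1"
    and psi_borel: "sets \<psi> = sets borel"
    and psi_prob: "prob_space \<psi>"
    and psi_interval: "emeasure \<psi> {-1..1} = 1"
    and psi_inf: "infinite (msupp \<psi>)"
    and psi_orth: "\<And>m n. m \<noteq> n \<Longrightarrow>
                     (\<integral>x. Qpoly p q r m x * Qpoly p q r n x \<partial>\<psi>) = 0"
    and eta_pos: "Sup (msupp \<psi>) > 0"
    and Q_pos: "\<And>n x. x \<ge> Sup (msupp \<psi>) \<Longrightarrow> Qpoly p q r n x > 0"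
    and theta: "\<theta> \<ge> Sup (msupp \<psi>)"
  shows "((\<forall>j. r j = 0) \<longrightarrow>
            (\<forall>n. \<bar>Qpoly p q r n \<theta> / Qpoly p q r n (-\<theta>)\<bar> = 1))
       \<and> ((\<exists>j. r j > 0) \<longrightarrow>
            antimono (\<lambda>n. \<bar>Qpoly p q r n \<theta> / Qpoly p q r n (-\<theta>)\<bar>) \<and>
            (\<exists>L. (\<lambda>n. \<bar>Qpoly p q r n \<theta> / Qpoly p q r n (-\<theta>)\<bar>) \<longlonglongrightarrow> L
                 \<and> 0 \<le> L \<and> L < 1))"
proof -
  define a where "a n = Qpoly p q r n \<theta>" for n
  define b where "b n = (-1)^n * Qpoly p q r n (-\<theta>)" for n
  define D where "D n = a n * b (Suc n) - a (Suc n) * b n" for n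
  have qq: "\<And>j. q j \<ge> 0" by (metis q0 q_pos less_eq_real_def not0_implies_Suc order_refl)
  have apos: "\<And>n. a n > 0" unfolding a_def using Q_pos theta by blast
  have arec: "p n * a (Suc n) = (\<theta> - r n) * a n - q n * a (n - 1)" for n
    unfolding a_def using Qrec[of p q, OF p_pos q0] by blast
  have brec: "p n * b (Suc n) = (\<theta> + r n) * b n - q n * b (n - 1)" for n
  proof (cases n)
    case 0 thus ?thesis using Qrec[of p q, OF p_pos q0, of 0 r "-\<theta>"] q0 p_pos[of 0] unfolding b_def by simp
  next
    case (Suc m)
    have "p n * b (Suc n) = (-1)^(Suc n) * (p n * Qpoly p q r (Suc n) (-\<theta>))"
      unfolding b_def by simp
    also have "\<dots> = (-1)^(Suc n) * ((-\<theta> - r n) * Qpoly p q r n (-\<theta>) - q n * Qpoly p q r (n - 1) (-\<theta>))"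
      using Qrec[of p q, OF p_pos q0, of n r "-\<theta>"] by simp
    also have "\<dots> = (\<theta> + r n) * b n - q n * b (n - 1)"
      unfolding b_def Suc by (simp add: algebra_simps)
    finally show ?thesis .
  qed
  have DR: "p n * D n = 2 * r n * a n * b n + q n * D (n - 1)" for n
  proof (cases n)
    case 0
    have "p n * D n = a n * (p n * b (Suc n)) - (p n * a (Suc n)) * b n"
      unfolding D_def by (simp add: algebra_simps)
    also have "\<dots> = 2 * r n * a n * b n + q n * D (n - 1)"
      unfolding arec brec using q0 0 by (simp add: algebra_simps)
    finally show ?thesis .
  next
    case (Suc m)
    have "p n * D n = a n * (p n * b (Suc n)) - (p n * a (Suc n)) * b n"
      unfolding D_def by (simp add: algebra_simps)
    also have "\<dots> = 2 * r n * a n * b n + q n * D (n - 1)"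
      unfolding arec brec D_def Suc by (simp add: algebra_simps)
    finally show ?thesis .
  qed
  have a0: "a 0 = 1" and b0: "b 0 = 1" by (simp_all add: a_def b_def)
  have ind: "b n > 0 \<and> D n \<ge> 0" for n
    by (rule main_ind[OF p_pos qq r_nonneg apos b0 a0 D_def DR q0])
  have bpos: "\<And>n. b n > 0" using ind by blast
  have Dnn: "\<And>n. D n \<ge> 0" using ind by blast
  define f where "f n = a n / b n" for n
  have feq: "(\<lambda>n. \<bar>Qpoly p q r n \<theta> / Qpoly p q r n (-\<theta>)\<bar>) = f"
  proof
    fix n
    have "Qpoly p q r n (-\<theta>) = (-1)^n * b n" unfolding b_def by simp
    hence "\<bar>Qpoly p q r n \<theta> / Qpoly p q r n (-\<theta>)\<bar> = \<bar>a n / b n\<bar>"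
      unfolding a_def by (simp add: abs_mult power_abs)
    thus "\<bar>Qpoly p q r n \<theta> / Qpoly p q r n (-\<theta>)\<bar> = f n"
      using apos[of n] bpos[of n] unfolding f_def by simp
  qed
  have fstep: "f n - f (Suc n) = D n / (b n * b (Suc n))" for n
    using bpos[of n] bpos[of "Suc n"] unfolding f_def D_def by (simp add: field_simps)
  have fdec: "f (Suc n) \<le> f n" for n
  proof -
    have "D n / (b n * b (Suc n)) \<ge> 0" using Dnn[of n] bpos[of n] bpos[of "Suc n"] by simp
    thus ?thesis using fstep[of n] by linarith
  qed
  have fanti: "antimono f" by (rule decseq_SucI) (rule fdec)
  have fnn: "\<And>n. f n \<ge> 0" using apos bpos unfolding f_def by (simp add: less_imp_le)
  have f0: "f 0 = 1" using a0 b0 unfolding f_def by simp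
  show ?thesis
  proof (intro conjI impI)
    assume r0: "\<forall>j. r j = 0"
    have "D n = 0" for n
    proof (induction n)
      case 0 show ?case using DR[of 0] r0 q0 p_pos[of 0] by simp
    next
      case (Suc n) show ?case using DR[of "Suc n"] r0 Suc p_pos[of "Suc n"] by simp
    qed
    hence "f n = 1" for n
      by (induction n) (use f0 fstep in auto)
    thus "\<forall>n. \<bar>Qpoly p q r n \<theta> / Qpoly p q r n (-\<theta>)\<bar> = 1" using feq by (metis)
  next
    assume "\<exists>j. r j > 0"
    thus "antimono (\<lambda>n. \<bar>Qpoly p q r n \<theta> / Qpoly p q r n (-\<theta>)\<bar>)" using feq fanti by simp
  next
    assume "\<exists>j. r j > 0"
    then obtain j where rj: "r j > 0" by blast
    have "p j * D j > 0"
    proof -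
      have "2 * r j * a j * b j > 0" using rj apos bpos by simp
      moreover have "q j * D (j - 1) \<ge> 0" using qq Dnn by simp
      ultimately show ?thesis using DR[of j] by (simp add: algebra_simps)
    qed
    hence "D j > 0" using p_pos[of j] by (simp add: zero_less_mult_iff)
    hence "D j / (b j * b (Suc j)) > 0" using bpos[of j] bpos[of "Suc j"] by simp
    hence lt: "f (Suc j) < f j" using fstep[of j] by linarith
    have "f j \<le> f 0" using fanti by (simp add: antimonoD)
    hence fj1: "f (Suc j) < 1" using lt f0 by simp
    have bdd: "bdd_below (range f)" using fnn by (intro bdd_belowI[where m=0]) auto
    have conv: "f \<longlonglongrightarrow> (INF n. f n)"
      by (rule LIMSEQ_decseq_INF[OF bdd]) (use fanti in \<open>simp add: decseq_def antimono_def\<close>)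
    have L0: "(INF n. f n) \<ge> 0" using fnn by (intro cINF_greatest) auto
    have "(INF n. f n) \<le> f (Suc j)" using bdd by (rule cINF_lower) simp
    thus "\<exists>L. (\<lambda>n. \<bar>Qpoly p q r n \<theta> / Qpoly p q r n (-\<theta>)\<bar>) \<longlonglongrightarrow> L \<and> 0 \<le> L \<and> L < 1"
      using conv L0 fj1 feq by auto
  qed
qed

end
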